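(* Let $3\le w<n$. If there exists a Steiner system $S(3,w,n)$ such that every $S(2,w-1,n-1)$ system derived from it is resolvable, then $q'_0(3,w,n)=\frac{n-2}{w-2}+1$.
   Context: $\mathbb{Z}_q=\{0,\dots,q-1\}$ (an alphabet); $\mathrm{wt}$ = number of nonzero coordinates; $d$ = Hamming distance; $J_q(n,w)$ = weight-$w$ words of $\mathbb{Z}_q^n$. An $(n,w,d)_q$ code of size $M$ is a subset $C\subseteq J_q(n,w)$ with $|C|=M$ and pairwise distances at least $d$. A Steiner system $S(t,k,n)$ is a pair $(N,B)$, $|N|=n$, $B$ a set of $k$-subsets (blocks) of $N$ with every $t$-subset of $N$ in exactly one block. For a point $p\in N$ (when $t\ge2$), the derived system is $(N\setminus\{p\},\{\beta\setminus\{p\}: p\in\beta\in B\})$, an $S(t-1,k-1,n-1)$. A Steiner system $S(t,k,n)$ is resolvable if its block set can be partitioned into classes each of which is a partition of $N$. For $t,k,n$ such that an $S(t,k,n)$ exists, $q'_0(t,k,n)$ is the smallest $q$ for which an $(n,k,2k-t+1)_q$ code of size $\binom{n}{t}/\binom{k}{t}$ exists. *)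

theory Defs
  imports Complex_Main "HOL-Library.Disjoint_Sets"
begin

definition wt :: "nat list \<Rightarrow> nat" where
  "wt x = card {i. i < length x \<and> x ! i \<noteq> 0}"

definition hdist :: "nat list \<Rightarrow> nat list \<Rightarrow> nat" where
  "hdist x y = card {i. i < length x \<and> x ! i \<noteq> y ! i}"

definition Jq :: "nat \<Rightarrow> nat \<Rightarrow> nat \<Rightarrow> nat list set" where
  "Jq q n w = {x. length x = n \<and> set x \<subseteq> {0..<q} \<and> wt x = w}"

definition cw_code :: "nat \<Rightarrow> nat \<Rightarrow> nat \<Rightarrow> nat \<Rightarrow> nat \<Rightarrow> nat list set \<Rightarrow> bool" where
  "cw_code q n w d M C \<longleftrightarrow> C \<subseteq> Jq q n w \<and> card C = M \<and>
     (\<forall>x\<in>C. \<forall>y\<in>C. x \<noteq> y \<longrightarrow> hdist x y \<ge> d)"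

definition steiner :: "nat \<Rightarrow> nat \<Rightarrow> nat \<Rightarrow> 'a set \<Rightarrow> 'a set set \<Rightarrow> bool" where
  "steiner t k n N B \<longleftrightarrow> finite N \<and> card N = n \<and>
     (\<forall>b\<in>B. b \<subseteq> N \<and> card b = k) \<and>
     (\<forall>T. T \<subseteq> N \<and> card T = t \<longrightarrow> (\<exists>!b. b \<in> B \<and> T \<subseteq> b))"

definition derived_blocks :: "'a set set \<Rightarrow> 'a \<Rightarrow> 'a set set" where
  "derived_blocks B p = {b - {p} | b. b \<in> B \<and> p \<in> b}"

definition resolvable :: "'a set \<Rightarrow> 'a set set \<Rightarrow> bool" where
  "resolvable N B \<longleftrightarrow> (\<exists>P. partition_on B P \<and> (\<forall>C\<in>P. partition_on N C))"

definition q0' :: "nat \<Rightarrow> nat \<Rightarrow> nat \<Rightarrow> nat" where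
  "q0' t k n = (LEAST q. \<exists>C. cw_code q n k (2 * k - t + 1) ((n choose t) div (k choose t)) C)"

end

theory Submission
  imports Defs
begin


lemma steiner_finB: assumes "steiner t k n N B" shows "finite B"
proof -
  have "finite N" "B \<subseteq> Pow N" using assms unfolding steiner_def by auto
  then show ?thesis by (metis finite_Pow_iff finite_subset)
qed

lemma steinerD:
  assumes "steiner t k n N B"
  shows "finite N" "card N = n" "\<And>b. b \<in> B \<Longrightarrow> b \<subseteq> N" "\<And>b. b \<in> B \<Longrightarrow> card b = k"
    "\<And>T. T \<subseteq> N \<Longrightarrow> card T = t \<Longrightarrow> \<exists>!b. b \<in> B \<and> T \<subseteq> b"
  using assms unfolding steiner_def by simp_all

lemma steiner_unique:
  assumes "steiner 3 w n N B" "b \<in> B" "b' \<in> B" "T \<subseteq> b" "T \<subseteq> b'" "card T = 3"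
  shows "b = b'"
proof -
  have "T \<subseteq> N" using steinerD(3)[OF assms(1,2)] assms(4) by (rule order.trans[rotated])
  then have "\<exists>!b. b \<in> B \<and> T \<subseteq> b" using steinerD(5)[OF assms(1)] assms(6) by simp
  then show ?thesis using assms(2-5) by blast
qed

lemma steiner_inter:
  assumes "steiner 3 w n N B" "b \<in> B" "b' \<in> B" "b \<noteq> b'"
  shows "card (b \<inter> b') \<le> 2"
proof (rule ccontr)
  assume "\<not> ?thesis"
  then have "3 \<le> card (b \<inter> b')" by simp
  then obtain T where "T \<subseteq> b \<inter> b'" "card T = 3" by (meson obtain_subset_with_card_n)
  then show False using steiner_unique[OF assms(1-3)] assms(4) by blast
qed

lemma steiner_count:
  assumes "steiner 3 w n N B"
  shows "card B * (w choose 3) = n choose 3"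
proof -
  have fN: "finite N" and cN: "card N = n" and bl: "\<And>b. b \<in> B \<Longrightarrow> b \<subseteq> N \<and> card b = w"
    and ex: "\<And>T. T \<subseteq> N \<Longrightarrow> card T = 3 \<Longrightarrow> \<exists>!b. b \<in> B \<and> T \<subseteq> b"
    using steinerD[OF assms(1)] by auto
  have fB: "finite B" using steiner_finB[OF assms] .
  have fT: "\<And>a. a \<in> B \<Longrightarrow> finite {T. T \<subseteq> a \<and> card T = 3}"
    using bl fN by (metis (no_types, lifting) Collect_mono Pow_def finite_Pow_iff finite_subset)
  define Sg where "Sg = Sigma B (\<lambda>b. {T. T \<subseteq> b \<and> card T = 3})"
  have "card Sg = (\<Sum>b\<in>B. card {T. T \<subseteq> b \<and> card T = 3})"
    unfolding Sg_def using fB fT by (subst card_SigmaI) auto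
  also have "\<dots> = (\<Sum>b\<in>B. w choose 3)"
    using bl fN by (intro sum.cong refl) (metis n_subsets finite_subset)
  finally have c1: "card Sg = card B * (w choose 3)" by simp
  have "bij_betw snd Sg {T. T \<subseteq> N \<and> card T = 3}"
    unfolding bij_betw_def
  proof
    show "inj_on snd Sg" unfolding inj_on_def Sg_def using steiner_unique[OF assms] by force
    show "snd ` Sg = {T. T \<subseteq> N \<and> card T = 3}"
    proof
      show "snd ` Sg \<subseteq> {T. T \<subseteq> N \<and> card T = 3}" unfolding Sg_def using bl by force
      show "{T. T \<subseteq> N \<and> card T = 3} \<subseteq> snd ` Sg"
      proof
        fix T assume "T \<in> {T. T \<subseteq> N \<and> card T = 3}"
        then obtain b where "b \<in> B" "T \<subseteq> b" "card T = 3" using ex by blast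
        then have "(b, T) \<in> Sg" unfolding Sg_def by auto
        then show "T \<in> snd ` Sg" by force
      qed
    qed
  qed
  then have "card Sg = n choose 3" using bij_betw_same_card n_subsets[OF fN] cN by metis
  then show ?thesis using c1 by simp
qed

lemma steiner_lambda2:
  assumes "steiner 3 w n N B" "p \<in> N" "q \<in> N" "p \<noteq> q"
  shows "card {b\<in>B. p \<in> b \<and> q \<in> b} * (w - 2) = n - 2"
proof -
  have fN: "finite N" and cN: "card N = n" and bl: "\<And>b. b \<in> B \<Longrightarrow> b \<subseteq> N \<and> card b = w"
    and ex: "\<And>T. T \<subseteq> N \<Longrightarrow> card T = 3 \<Longrightarrow> \<exists>!b. b \<in> B \<and> T \<subseteq> b"
    using steinerD[OF assms(1)] by auto
  have fB: "finite B" using steiner_finB[OF assms(1)] .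
  define Bpq where "Bpq = {b\<in>B. p \<in> b \<and> q \<in> b}"
  define Sg where "Sg = Sigma Bpq (\<lambda>b. b - {p, q})"
  have "card Sg = (\<Sum>b\<in>Bpq. card (b - {p,q}))"
    unfolding Sg_def Bpq_def using fB bl fN by (subst card_SigmaI) (auto intro: finite_subset)
  also have "\<dots> = (\<Sum>b\<in>Bpq. w - 2)"
  proof (intro sum.cong refl)
    fix b assume "b \<in> Bpq"
    then have "b \<in> B" "p \<in> b" "q \<in> b" unfolding Bpq_def by auto
    then show "card (b - {p, q}) = w - 2" using bl[of b] fN assms(4)
      by (subst card_Diff_subset) (auto intro: finite_subset)
  qed
  finally have c1: "card Sg = card Bpq * (w - 2)" by simp
  have "bij_betw snd Sg (N - {p, q})"
    unfolding bij_betw_def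
  proof
    show "inj_on snd Sg"
    proof (rule inj_onI)
      fix x y assume xy: "x \<in> Sg" "y \<in> Sg" "snd x = snd y"
      then obtain b c z where "x = (b, z)" "y = (c, z)" "b \<in> Bpq" "c \<in> Bpq" "z \<in> b - {p,q}" "z \<in> c - {p,q}"
        unfolding Sg_def by auto
      moreover have "card {p,q,z} = 3" using calculation assms(4) by auto
      ultimately show "x = y" using steiner_unique[OF assms(1), of b c "{p,q,z}"] unfolding Bpq_def by auto
    qed
    show "snd ` Sg = N - {p, q}"
    proof
      show "snd ` Sg \<subseteq> N - {p, q}" unfolding Sg_def Bpq_def using bl by force
      show "N - {p, q} \<subseteq> snd ` Sg"
      proof
        fix z assume z: "z \<in> N - {p, q}"
        then have "{p,q,z} \<subseteq> N" "card {p,q,z} = 3" using assms by auto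
        then obtain b where "b \<in> B" "{p,q,z} \<subseteq> b" using ex by blast
        then have "(b, z) \<in> Sg" unfolding Sg_def Bpq_def using z by auto
        then show "z \<in> snd ` Sg" by force
      qed
    qed
  qed
  moreover have "card (N - {p, q}) = n - 2" using cN assms fN by (subst card_Diff_subset) auto
  ultimately have "card Sg = n - 2" using bij_betw_same_card by metis
  then show ?thesis using c1 Bpq_def by simp
qed



lemma hdist_sub:
  assumes "length x = n" "length y = n"
  shows "hdist x y = card {i. i < n \<and> x ! i \<noteq> y ! i}"
  using assms unfolding hdist_def by simp

lemma lower:
  assumes code: "cw_code q n w (2*w-2) M C" and w3: "3 \<le> w" and wn: "w < n"
    and MM: "M * (w choose 3) = n choose 3"
  shows "(n-2) div (w-2) + 1 \<le> q"
proof -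
  define S where "S x = {i. i < n \<and> x ! i \<noteq> 0}" for x :: "nat list"
  have CJ: "C \<subseteq> Jq q n w" and cC: "card C = M"
    and dist: "\<And>x y. x \<in> C \<Longrightarrow> y \<in> C \<Longrightarrow> x \<noteq> y \<Longrightarrow> hdist x y \<ge> 2*w-2"
    using code unfolding cw_code_def by auto
  have len: "\<And>x. x \<in> C \<Longrightarrow> length x = n" using CJ unfolding Jq_def by auto
  have vals: "\<And>x i. x \<in> C \<Longrightarrow> i < n \<Longrightarrow> x ! i < q"
    using CJ unfolding Jq_def by (force simp: subset_iff)
  have cS: "\<And>x. x \<in> C \<Longrightarrow> card (S x) = w"
    using CJ unfolding Jq_def wt_def S_def by auto
  have fS: "\<And>x. finite (S x)" unfolding S_def by auto
  have SN: "\<And>x. S x \<subseteq> {0..<n}" unfolding S_def by auto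
  have Dsub: "\<And>x y. {i. i < n \<and> x ! i \<noteq> y ! i} \<subseteq> S x \<union> S y" unfolding S_def by auto
  have cU: "\<And>x y. x \<in> C \<Longrightarrow> y \<in> C \<Longrightarrow> card (S x \<union> S y) = 2*w - card (S x \<inter> S y)"
    using cS fS card_Un_Int by (metis add_diff_cancel_right' mult_2)
  have inter: "\<And>x y. x \<in> C \<Longrightarrow> y \<in> C \<Longrightarrow> x \<noteq> y \<Longrightarrow> card (S x \<inter> S y) \<le> 2"
  proof -
    fix x y assume xy: "x \<in> C" "y \<in> C" "x \<noteq> y"
    have "2*w-2 \<le> hdist x y" using dist xy by blast
    also have "\<dots> \<le> card (S x \<union> S y)" using hdist_sub[OF len[OF xy(1)] len[OF xy(2)]] Dsub fS
      by (simp add: card_mono)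
    finally show "card (S x \<inter> S y) \<le> 2" using cU[OF xy(1,2)] card_mono[OF fS, of "S x \<inter> S y" x] cS[OF xy(1)] w3 by auto
  qed
  have eqval: "\<And>x y p p'. x \<in> C \<Longrightarrow> y \<in> C \<Longrightarrow> x \<noteq> y \<Longrightarrow> p \<in> S x \<inter> S y \<Longrightarrow> p' \<in> S x \<inter> S y \<Longrightarrow> p \<noteq> p' \<Longrightarrow> x ! p \<noteq> y ! p"
  proof
    fix x y p p' assume xy: "x \<in> C" "y \<in> C" "x \<noteq> y" "p \<in> S x \<inter> S y" "p' \<in> S x \<inter> S y" "p \<noteq> p'" "x ! p = y ! p"
    have "{p, p'} \<subseteq> S x \<inter> S y" using xy by auto
    then have c2: "2 \<le> card (S x \<inter> S y)" using xy(6) fS by (metis card_2_iff card_mono finite_Int)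
    have "2*w-2 \<le> hdist x y" using dist xy by blast
    also have "\<dots> \<le> card ((S x \<union> S y) - {p})"
    proof -
      have "{i. i < n \<and> x ! i \<noteq> y ! i} \<subseteq> (S x \<union> S y) - {p}" using Dsub[of x y] xy(7) by auto
      then show ?thesis using hdist_sub[OF len[OF xy(1)] len[OF xy(2)]] fS by (simp add: card_mono)
    qed
    also have "\<dots> = card (S x \<union> S y) - 1" using xy(4) fS by (subst card_Diff_subset) auto
    finally show False using cU[OF xy(1,2)] c2 cS[OF xy(1)] card_mono[OF fS, of "S x \<inter> S y" x] w3 by auto
  qed
  have injS: "inj_on S C"
  proof (rule inj_onI, rule ccontr)
    fix x y assume xy: "x \<in> C" "y \<in> C" "S x = S y" "x \<noteq> y"
    then show False using inter[OF xy(1,2,4)] cS[OF xy(1)] w3 by simp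
  qed
  have uniq: "\<And>b b' T. b \<in> S ` C \<Longrightarrow> b' \<in> S ` C \<Longrightarrow> T \<subseteq> b \<Longrightarrow> T \<subseteq> b' \<Longrightarrow> card T = 3 \<Longrightarrow> b = b'"
  proof (rule ccontr)
    fix b b' T assume h: "b \<in> S ` C" "b' \<in> S ` C" "T \<subseteq> b" "T \<subseteq> b'" "card T = 3" "b \<noteq> b'"
    then obtain x y where "x \<in> C" "y \<in> C" "b = S x" "b' = S y" "x \<noteq> y" by blast
    moreover have "3 \<le> card (b \<inter> b')" using h fS calculation by (metis card_mono finite_Int le_inf_iff order_refl)
    ultimately show False using inter by fastforce
  qed
  have fC: "finite C" using CJ
  proof -
    have "inj_on S C" by (rule injS)
    moreover have "finite (S ` C)" using SN by (meson finite_Pow_iff finite_atLeastLessThan finite_subset image_subsetI Pow_iff)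
    ultimately show ?thesis using finite_imageD by blast
  qed
  have cSC: "card (S ` C) = M" using card_image[OF injS] cC by simp
  have st: "steiner 3 w n {0..<n} (S ` C)"
    unfolding steiner_def
  proof (intro conjI allI impI)
    show "finite {0..<n}" by simp
    show "card {0..<n} = n" by simp
    show "\<forall>b\<in>S ` C. b \<subseteq> {0..<n} \<and> card b = w" using SN cS by auto
    fix T assume T: "T \<subseteq> {0..<n} \<and> card T = 3"
    define Sg where "Sg = Sigma (S ` C) (\<lambda>b. {T. T \<subseteq> b \<and> card T = 3})"
    have fT: "\<And>a. finite {T. T \<subseteq> S a \<and> card T = 3}"
      using fS by (metis (no_types, lifting) Collect_mono Pow_def finite_Pow_iff finite_subset)
    have "card Sg = (\<Sum>b\<in>S ` C. card {T. T \<subseteq> b \<and> card T = 3})"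
      unfolding Sg_def using fC fT by (subst card_SigmaI) auto
    also have "\<dots> = (\<Sum>b\<in>S ` C. w choose 3)"
      using cS fS by (intro sum.cong refl) (auto simp: n_subsets)
    finally have c1: "card Sg = n choose 3" using cSC MM by simp
    have injsnd: "inj_on snd Sg" unfolding inj_on_def Sg_def using uniq by force
    have sub: "snd ` Sg \<subseteq> {T. T \<subseteq> {0..<n} \<and> card T = 3}" unfolding Sg_def using SN by force
    have "card (snd ` Sg) = card {T. T \<subseteq> {0..<n} \<and> card T = 3}"
      using card_image[OF injsnd] c1 n_subsets[of "{0..<n}" 3] by simp
    then have "snd ` Sg = {T. T \<subseteq> {0..<n} \<and> card T = 3}"
      using sub by (intro card_subset_eq) auto
    then have "T \<in> snd ` Sg" using T by auto
    then obtain x where "x \<in> C" "T \<subseteq> S x" unfolding Sg_def by auto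
    then show "\<exists>!b. b \<in> S ` C \<and> T \<subseteq> b" using uniq T by blast
  qed
  have "(0::nat) \<in> {0..<n}" "(1::nat) \<in> {0..<n}" using wn w3 by auto
  from steiner_lambda2[OF st this] have lam: "card {b \<in> S ` C. 0 \<in> b \<and> 1 \<in> b} * (w - 2) = n - 2" by simp
  define X where "X = {x\<in>C. 0 \<in> S x \<and> 1 \<in> S x}"
  have "{b \<in> S ` C. 0 \<in> b \<and> 1 \<in> b} = S ` X" unfolding X_def by auto
  then have cX: "card X * (w - 2) = n - 2" using lam card_image[of S X] injS unfolding X_def
    by (metis (no_types, lifting) inj_on_subset mem_Collect_eq subsetI)
  have "w - 2 > 0" using w3 by simp
  then have lamX: "(n-2) div (w-2) = card X" using cX by (metis div_mult_self_is_m)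
  have "inj_on (\<lambda>x. x ! 0) X"
  proof (rule inj_onI, rule ccontr)
    fix x y assume "x \<in> X" "y \<in> X" "x ! 0 = y ! 0" "x \<noteq> y"
    then show False using eqval[of x y 0 1] unfolding X_def by auto
  qed
  moreover have "(\<lambda>x. x ! 0) ` X \<subseteq> {1..<q}"
    using vals wn unfolding X_def S_def by force
  ultimately have "card X \<le> q - 1" by (metis card_atLeastLessThan card_inj_on_le finite_atLeastLessThan)
  moreover have "card X \<ge> 1"
  proof -
    have "n - 2 > 0" using wn w3 by simp
    then show ?thesis using cX by (cases "card X") auto
  qed
  ultimately show ?thesis using lamX by linarith
qed



lemma upper:
  assumes st: "steiner 3 w n N B" and res: "\<forall>p\<in>N. resolvable (N - {p}) (derived_blocks B p)"
    and w3: "3 \<le> w" and wn: "w < n"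
  shows "\<exists>C. cw_code ((n-2) div (w-2) + 1) n w (2*w-2) (card B) C"
proof -
  have fN: "finite N" and cN: "card N = n" and bl: "\<And>b. b \<in> B \<Longrightarrow> b \<subseteq> N \<and> card b = w"
    using steinerD[OF st] by auto
  have fB: "finite B" using steiner_finB[OF st] .
  define lam where "lam = (n-2) div (w-2)"
  have lamE: "\<And>p q. p \<in> N \<Longrightarrow> q \<in> N \<Longrightarrow> p \<noteq> q \<Longrightarrow> card {b\<in>B. p \<in> b \<and> q \<in> b} = lam"
  proof -
    fix p q assume "p \<in> N" "q \<in> N" "p \<noteq> q"
    from steiner_lambda2[OF st this] have "card {b\<in>B. p \<in> b \<and> q \<in> b} * (w - 2) = n - 2" .
    moreover have "w - 2 > 0" using w3 by simp
    ultimately show "card {b\<in>B. p \<in> b \<and> q \<in> b} = lam" unfolding lam_def by (metis div_mult_self_is_m)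
  qed
  obtain g where g: "bij_betw g {0..<n} N" using finite_same_card_bij[of "{0..<n}" N] fN cN by auto
  have gin: "\<And>i. i < n \<Longrightarrow> g i \<in> N" using g unfolding bij_betw_def by auto
  have ginj: "\<And>i j. i < n \<Longrightarrow> j < n \<Longrightarrow> g i = g j \<Longrightarrow> i = j" using g unfolding bij_betw_def inj_on_def by auto
  obtain P where P: "\<And>p. p \<in> N \<Longrightarrow> partition_on (derived_blocks B p) (P p) \<and> (\<forall>c\<in>P p. partition_on (N - {p}) c)"
    using res unfolding resolvable_def by metis
  have fD: "\<And>p. finite (derived_blocks B p)" unfolding derived_blocks_def using fB by auto
  have fP: "\<And>p. p \<in> N \<Longrightarrow> finite (P p)"
    using P fD finite_elements by blast
  have disjP: "\<And>p c c' d. p \<in> N \<Longrightarrow> c \<in> P p \<Longrightarrow> c' \<in> P p \<Longrightarrow> d \<in> c \<Longrightarrow> d \<in> c' \<Longrightarrow> c = c'"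
  proof (rule ccontr)
    fix p c c' d assume h: "p \<in> N" "c \<in> P p" "c' \<in> P p" "d \<in> c" "d \<in> c'" "c \<noteq> c'"
    have "disjoint (P p)" using P[OF h(1)] partition_onD2 by blast
    from disjointD[OF this h(2,3,6)] h(4,5) show False by blast
  qed
  have disjc: "\<And>p c d d' x. p \<in> N \<Longrightarrow> c \<in> P p \<Longrightarrow> d \<in> c \<Longrightarrow> d' \<in> c \<Longrightarrow> x \<in> d \<Longrightarrow> x \<in> d' \<Longrightarrow> d = d'"
  proof (rule ccontr)
    fix p c d d' x assume h: "p \<in> N" "c \<in> P p" "d \<in> c" "d' \<in> c" "x \<in> d" "x \<in> d'" "d \<noteq> d'"
    have "disjoint c" using P[OF h(1)] h(2) partition_onD2 by blast
    from disjointD[OF this h(3,4,7)] h(5,6) show False by blast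
  qed
  have cover: "\<And>p c x. p \<in> N \<Longrightarrow> c \<in> P p \<Longrightarrow> x \<in> N - {p} \<Longrightarrow> \<exists>d\<in>c. x \<in> d"
  proof -
    fix p c x assume h: "p \<in> N" "c \<in> P p" "x \<in> N - {p}"
    have "N - {p} = \<Union>c" using P[OF h(1)] h(2) partition_onD1 by blast
    then show "\<exists>d\<in>c. x \<in> d" using h(3) by blast
  qed
  have memD: "\<And>p c d. p \<in> N \<Longrightarrow> c \<in> P p \<Longrightarrow> d \<in> c \<Longrightarrow> \<exists>b\<in>B. p \<in> b \<and> d = b - {p}"
  proof -
    fix p c d assume h: "p \<in> N" "c \<in> P p" "d \<in> c"
    have "derived_blocks B p = \<Union>(P p)" using P[OF h(1)] partition_onD1 by blast
    then have "d \<in> derived_blocks B p" using h by blast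
    then show "\<exists>b\<in>B. p \<in> b \<and> d = b - {p}" unfolding derived_blocks_def by blast
  qed
  have Dcov: "\<And>p b. p \<in> N \<Longrightarrow> b \<in> B \<Longrightarrow> p \<in> b \<Longrightarrow> \<exists>c\<in>P p. b - {p} \<in> c"
  proof -
    fix p b assume h: "p \<in> N" "b \<in> B" "p \<in> b"
    have "derived_blocks B p = \<Union>(P p)" using P[OF h(1)] partition_onD1 by blast
    moreover have "b - {p} \<in> derived_blocks B p" unfolding derived_blocks_def using h by blast
    ultimately show "\<exists>c\<in>P p. b - {p} \<in> c" by blast
  qed
  have n2: "2 \<le> card N" using cN wn w3 by simp
  have cardP: "\<And>p. p \<in> N \<Longrightarrow> card (P p) \<le> lam"
  proof -
    fix p assume p: "p \<in> N"
    have "card (N - {p}) > 0" using cN p wn w3 fN by simp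
    then have "N - {p} \<noteq> {}" by (metis card.empty less_irrefl)
    then obtain q where q: "q \<in> N" "q \<noteq> p" by blast
    define h where "h c = (SOME b. b \<in> B \<and> p \<in> b \<and> q \<in> b \<and> b - {p} \<in> c)" for c
    have hP: "\<And>c. c \<in> P p \<Longrightarrow> h c \<in> B \<and> p \<in> h c \<and> q \<in> h c \<and> h c - {p} \<in> c"
    proof -
      fix c assume c: "c \<in> P p"
      obtain d where "d \<in> c" "q \<in> d" using cover[OF p c, of q] q by blast
      then obtain b where "b \<in> B" "p \<in> b" "d = b - {p}" using memD[OF p c] by blast
      then have "\<exists>b. b \<in> B \<and> p \<in> b \<and> q \<in> b \<and> b - {p} \<in> c" using \<open>d \<in> c\<close> \<open>q \<in> d\<close> by blast
      then show "h c \<in> B \<and> p \<in> h c \<and> q \<in> h c \<and> h c - {p} \<in> c" unfolding h_def by (rule someI_ex)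
    qed
    have "inj_on h (P p)"
      by (rule inj_onI) (metis hP disjP[OF p])
    moreover have "h ` P p \<subseteq> {b\<in>B. p \<in> b \<and> q \<in> b}" using hP by auto
    moreover have "finite {b\<in>B. p \<in> b \<and> q \<in> b}" using fB by auto
    ultimately have "card (P p) \<le> card {b\<in>B. p \<in> b \<and> q \<in> b}" by (metis card_inj_on_le)
    then show "card (P p) \<le> lam" using lamE[OF p q(1)] q(2) by simp
  qed
  have "\<forall>p\<in>N. \<exists>f. f ` P p \<subseteq> {1..lam} \<and> inj_on f (P p)"
    using cardP fP by (intro ballI card_le_inj) auto
  then obtain e where e: "\<And>p. p \<in> N \<Longrightarrow> e p ` P p \<subseteq> {1..lam} \<and> inj_on (e p) (P p)" by metis
  define cls where "cls p b = (THE c. c \<in> P p \<and> b - {p} \<in> c)" for p b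
  have clsP: "\<And>p b. p \<in> N \<Longrightarrow> b \<in> B \<Longrightarrow> p \<in> b \<Longrightarrow> cls p b \<in> P p \<and> b - {p} \<in> cls p b"
  proof -
    fix p b assume h: "p \<in> N" "b \<in> B" "p \<in> b"
    obtain c where "c \<in> P p" "b - {p} \<in> c" using Dcov[OF h] by blast
    then have "\<exists>!c. c \<in> P p \<and> b - {p} \<in> c" using disjP[OF h(1)] by blast
    then show "cls p b \<in> P p \<and> b - {p} \<in> cls p b" unfolding cls_def by (rule theI')
  qed
  define word where "word b = map (\<lambda>i. if g i \<in> b then e (g i) (cls (g i) b) else 0) [0..<n]" for b
  have wlen: "\<And>b. length (word b) = n" unfolding word_def by simp
  have wnth: "\<And>b i. i < n \<Longrightarrow> word b ! i = (if g i \<in> b then e (g i) (cls (g i) b) else 0)"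
    unfolding word_def by simp
  have wval: "\<And>b i. b \<in> B \<Longrightarrow> i < n \<Longrightarrow> g i \<in> b \<Longrightarrow> word b ! i \<in> {1..lam}"
  proof -
    fix b i assume h: "b \<in> B" "i < n" "g i \<in> b"
    have "cls (g i) b \<in> P (g i)" using clsP[OF gin[OF h(2)] h(1) h(3)] by blast
    then have "e (g i) (cls (g i) b) \<in> {1..lam}" using e[OF gin[OF h(2)]] by blast
    then show "word b ! i \<in> {1..lam}" using wnth[OF h(2)] h(3) by simp
  qed
  define A where "A b = {i. i < n \<and> g i \<in> b}" for b
  have fA: "\<And>b. finite (A b)" unfolding A_def by auto
  have suppw: "\<And>b. b \<in> B \<Longrightarrow> {i. i < length (word b) \<and> word b ! i \<noteq> 0} = A b"
  proof -
    fix b assume b: "b \<in> B"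
    have iff: "\<And>i. i < n \<Longrightarrow> word b ! i \<noteq> 0 \<longleftrightarrow> g i \<in> b"
    proof -
      fix i assume i: "i < n"
      show "word b ! i \<noteq> 0 \<longleftrightarrow> g i \<in> b"
      proof (cases "g i \<in> b")
        case True then show ?thesis using wval[OF b i] by auto
      next
        case False then show ?thesis using wnth[OF i] by simp
      qed
    qed
    show "{i. i < length (word b) \<and> word b ! i \<noteq> 0} = A b"
      unfolding A_def wlen using iff by blast
  qed
  have gA: "\<And>b. b \<in> B \<Longrightarrow> g ` A b = b"
  proof -
    fix b assume b: "b \<in> B"
    show "g ` A b = b"
    proof
      show "g ` A b \<subseteq> b" unfolding A_def by auto
      show "b \<subseteq> g ` A b"
      proof
        fix x assume "x \<in> b"
        then have "x \<in> N" using bl b by auto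
        then obtain i where "i < n" "g i = x" using g unfolding bij_betw_def by force
        then show "x \<in> g ` A b" unfolding A_def using \<open>x \<in> b\<close> by auto
      qed
    qed
  qed
  have ginjA: "\<And>X. X \<subseteq> {0..<n} \<Longrightarrow> inj_on g X" using g unfolding bij_betw_def by (meson inj_on_subset)
  have AN: "\<And>b. A b \<subseteq> {0..<n}" unfolding A_def by auto
  have cA: "\<And>b. b \<in> B \<Longrightarrow> card (A b) = w"
    using gA bl card_image ginjA AN by metis
  have cAint: "\<And>b b'. b \<in> B \<Longrightarrow> b' \<in> B \<Longrightarrow> b \<noteq> b' \<Longrightarrow> card (A b \<inter> A b') \<le> 2"
  proof -
    fix b b' assume h: "b \<in> B" "b' \<in> B" "b \<noteq> b'"
    have "g ` (A b \<inter> A b') \<subseteq> b \<inter> b'" unfolding A_def by auto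
    then have "card (g ` (A b \<inter> A b')) \<le> card (b \<inter> b')" using bl h fN
      by (meson card_mono finite_Int finite_subset)
    moreover have "card (g ` (A b \<inter> A b')) = card (A b \<inter> A b')" using ginjA AN
      by (meson card_image inf.coboundedI1)
    ultimately show "card (A b \<inter> A b') \<le> 2" using steiner_inter[OF st h] by simp
  qed
  have injw: "inj_on word B"
  proof (rule inj_onI)
    fix b b' assume h: "b \<in> B" "b' \<in> B" "word b = word b'"
    then have "A b = A b'" using suppw by metis
    then show "b = b'" using gA h by metis
  qed
  define C where "C = word ` B"
  have "cw_code (lam + 1) n w (2*w-2) (card B) C"
    unfolding cw_code_def
  proof (intro conjI)
    show "C \<subseteq> Jq (lam + 1) n w"
    proof
      fix x assume "x \<in> C"
      then obtain b where b: "b \<in> B" "x = word b" unfolding C_def by auto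
      have "set x \<subseteq> {0..<lam+1}"
      proof
        fix v assume "v \<in> set x"
        then obtain i where "i < n" "v = x ! i" using b wlen by (metis in_set_conv_nth)
        then show "v \<in> {0..<lam+1}" using wval[OF b(1) \<open>i < n\<close>] wnth b by (cases "g i \<in> b") auto
      qed
      then show "x \<in> Jq (lam + 1) n w" unfolding Jq_def wt_def using b suppw cA wlen by auto
    qed
    show "card C = card B" unfolding C_def using card_image[OF injw] .
    show "\<forall>x\<in>C. \<forall>y\<in>C. x \<noteq> y \<longrightarrow> 2 * w - 2 \<le> hdist x y"
    proof (intro ballI impI)
      fix x y assume "x \<in> C" "y \<in> C" "x \<noteq> y"
      then obtain b b' where bb: "b \<in> B" "b' \<in> B" "x = word b" "y = word b'" "b \<noteq> b'" unfolding C_def by auto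
      define D where "D = {i. i < n \<and> word b ! i \<noteq> word b' ! i}"
      have hd: "hdist x y = card D" unfolding D_def hdist_def using bb wlen by simp
      have fD2: "finite D" unfolding D_def by auto
      have cU: "card (A b \<union> A b') + card (A b \<inter> A b') = 2 * w" using card_Un_Int[OF fA fA, of b b'] cA bb by simp
      have symd: "(A b \<union> A b') - (A b \<inter> A b') \<subseteq> D"
      proof
        fix i assume i: "i \<in> (A b \<union> A b') - (A b \<inter> A b')"
        then have i1: "i < n" unfolding A_def by auto
        have "(g i \<in> b \<and> g i \<notin> b') \<or> (g i \<notin> b \<and> g i \<in> b')" using i unfolding A_def by auto
        then show "i \<in> D"
        proof
          assume h: "g i \<in> b \<and> g i \<notin> b'"
          then have "word b ! i \<noteq> 0" using wval[OF bb(1) i1] by auto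
          moreover have "word b' ! i = 0" using wnth[OF i1] h by simp
          ultimately show ?thesis unfolding D_def using i1 by auto
        next
          assume h: "g i \<notin> b \<and> g i \<in> b'"
          then have "word b' ! i \<noteq> 0" using wval[OF bb(2) i1] by auto
          moreover have "word b ! i = 0" using wnth[OF i1] h by simp
          ultimately show ?thesis unfolding D_def using i1 by auto
        qed
      qed
      have c2: "card (A b \<inter> A b') \<le> 2" using cAint bb by blast
      show "2 * w - 2 \<le> hdist x y"
      proof (cases "card (A b \<inter> A b') = 2")
        case True
        have "A b \<union> A b' \<subseteq> D"
        proof
          fix i assume i: "i \<in> A b \<union> A b'"
          show "i \<in> D"
          proof (cases "i \<in> A b \<inter> A b'")
            case False then show ?thesis using symd i by blast
          next
            case True2: True
            then obtain j where j: "j \<in> A b \<inter> A b'" "j \<noteq> i" using \<open>card (A b \<inter> A b') = 2\<close>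
              by (metis card_2_iff insertCI)
            have i1: "i < n" "g i \<in> b" "g i \<in> b'" using True2 unfolding A_def by auto
            have j1: "j < n" "g j \<in> b" "g j \<in> b'" using j unfolding A_def by auto
            define p where "p = g i"
            have pN: "p \<in> N" using gin i1 p_def by simp
            have gjp: "g j \<noteq> p" using ginj i1 j1 j(2) p_def by metis
            have cl1: "cls p b \<in> P p" "b - {p} \<in> cls p b" using clsP[OF pN bb(1)] i1 p_def by auto
            have cl2: "cls p b' \<in> P p" "b' - {p} \<in> cls p b'" using clsP[OF pN bb(2)] i1 p_def by auto
            have neq: "cls p b \<noteq> cls p b'"
            proof
              assume eq: "cls p b = cls p b'"
              have "b - {p} = b' - {p}"
                using disjc[OF pN cl1(1) cl1(2), of "b' - {p}" "g j"] cl2 eq j1 gjp by auto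
              then have "b = b'" using i1 p_def by (metis insert_Diff)
              then show False using bb(5) by simp
            qed
            have "e p (cls p b) \<noteq> e p (cls p b')" using e[OF pN] cl1 cl2 neq unfolding inj_on_def by blast
            then show "i \<in> D" unfolding D_def using wnth i1 p_def by simp
          qed
        qed
        then have "card (A b \<union> A b') \<le> card D" using fD2 by (simp add: card_mono)
        then show ?thesis using hd cU True by simp
      next
        case False
        then have c1: "card (A b \<inter> A b') \<le> 1" using c2 by simp
        have "card ((A b \<union> A b') - (A b \<inter> A b')) \<le> card D" using symd fD2 by (simp add: card_mono)
        moreover have "card ((A b \<union> A b') - (A b \<inter> A b')) = card (A b \<union> A b') - card (A b \<inter> A b')"
          using fA by (intro card_Diff_subset) auto
        ultimately show ?thesis using hd cU c1 by simp
      qed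
    qed
  qed
  then show ?thesis unfolding lam_def by blast
qed


theorem mainTheorem10:
  fixes w n :: nat
  assumes "3 \<le> w" and "w < n"
    and "\<exists>(N :: nat set) B. steiner 3 w n N B \<and>
           (\<forall>p\<in>N. resolvable (N - {p}) (derived_blocks B p))"
  shows "real (q0' 3 w n) = (real n - 2) / (real w - 2) + 1"
proof -
  obtain N :: "nat set" and B where st: "steiner 3 w n N B" and res: "\<forall>p\<in>N. resolvable (N - {p}) (derived_blocks B p)"
    using assms(3) by blast
  have cB: "card B * (w choose 3) = n choose 3" using steiner_count[OF st] .
  have wc: "w choose 3 > 0" using assms(1) by simp
  define M where "M = (n choose 3) div (w choose 3)"
  have MB: "M = card B" unfolding M_def using cB wc by (metis div_mult_self_is_m)
  have d: "2 * w - 3 + 1 = 2 * w - 2" using assms(1) by simp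
  define lam where "lam = (n-2) div (w-2)"
  have q: "q0' 3 w n = lam + 1"
    unfolding q0'_def d
  proof (rule Least_equality)
    show "\<exists>C. cw_code (lam + 1) n w (2 * w - 2) ((n choose 3) div (w choose 3)) C"
      using upper[OF st res assms(1,2)] MB unfolding lam_def M_def by simp
    fix y assume "\<exists>C. cw_code y n w (2 * w - 2) ((n choose 3) div (w choose 3)) C"
    then obtain C where C: "cw_code y n w (2 * w - 2) M C" unfolding M_def by blast
    show "lam + 1 \<le> y" using lower[OF C assms(1,2)] MB cB unfolding lam_def by simp
  qed
  have fN: "finite N" and cN: "card N = n" using st unfolding steiner_def by auto
  have "2 \<le> card N" using cN assms by simp
  then obtain T where T: "T \<subseteq> N" "card T = 2" by (meson obtain_subset_with_card_n)
  then obtain p q where "T = {p, q}" "p \<noteq> q" by (meson card_2_iff)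
  then have pq: "p \<in> N" "q \<in> N" "p \<noteq> q" using T by auto
  have lw: "card {b\<in>B. p \<in> b \<and> q \<in> b} * (w - 2) = n - 2" using steiner_lambda2[OF st pq] .
  have "w - 2 > 0" using assms(1) by simp
  then have "lam = card {b\<in>B. p \<in> b \<and> q \<in> b}" unfolding lam_def using lw by (metis div_mult_self_is_m)
  then have "lam * (w - 2) = n - 2" using lw by simp
  then have "real (lam * (w - 2)) = real (n - 2)" by simp
  moreover have "real (n - 2) = real n - 2" using assms by (simp add: of_nat_diff)
  moreover have "real (w - 2) = real w - 2" using assms by (simp add: of_nat_diff)
  ultimately have "real lam * (real w - 2) = real n - 2" by (simp only: of_nat_mult)
  moreover have "real w - 2 > 0" using assms(1) by simp
  ultimately have "real lam = (real n - 2) / (real w - 2)" by (simp add: field_simps)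
  then show ?thesis using q by simp
qed

end
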